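(* Let $D$ be a closed disk in the Euclidean plane whose boundary circle has circumference $8000$ (i.e. radius $4000/\pi$). Then there exist $8349$ closed rectangles, each of size $30\times 20$, all contained in $D$ and with pairwise disjoint interiors.
   Context: Rectangles may be placed at any position and with any orientation in the plane (they need not all be parallel to one another). *)

theory Defs
  imports "HOL-Analysis.Analysis"
begin

text \<open>A closed rectangle of
size w x h in arbitrary position and orientation: the image of [0,w] x [0,h] under
the rigid motion z \<mapsto> c + cis theta * z.\<close>
definition rect :: "complex \<Rightarrow> real \<Rightarrow> real \<Rightarrow> real \<Rightarrow> complex set" where
  "rect c \<theta> w h = {c + cis \<theta> * Complex a b | a b. 0 \<le> a \<and> a \<le> w \<and> 0 \<le> b \<and> b \<le> h}"

end

theory Submission
  imports Defs
begin

type_synonym row = "int \<times> bool \<times> nat"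

definition rhI :: "bool \<Rightarrow> int" where "rhI v = (if v then 30 else 20)"
definition rwI :: "bool \<Rightarrow> int" where "rwI v = (if v then 20 else 30)"

fun bx :: "row list \<Rightarrow> nat \<Rightarrow> real \<times> real \<times> real \<times> real" where
  "bx [] i = (0,0,0,0)"
| "bx ((y,v,n)#rs) i = (if i < n then
     (- (real n * rwI v) / 2 + real i * rwI v, - (real n * rwI v) / 2 + real (Suc i) * rwI v,
      real_of_int y, real_of_int (y + rhI v)) else bx rs (i - n))"

fun vt :: "row list \<Rightarrow> nat \<Rightarrow> bool" where
  "vt [] i = False"
| "vt ((y,v,n)#rs) i = (if i < n then v else vt rs (i - n))"

fun total :: "row list \<Rightarrow> nat" where
  "total [] = 0"
| "total ((y,v,n)#rs) = n + total rs"

fun okr :: "row list \<Rightarrow> bool" where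
  "okr [] = True"
| "okr ((y,v,n)#rs) = ((int n * rwI v)^2 + 4 * max (y^2) ((y + rhI v)^2) \<le> 6484370 \<and> okr rs)"

fun ch :: "row list \<Rightarrow> bool" where
  "ch ((y,v,n)#(y',v',n')#rs) = (y + rhI v \<le> y' \<and> ch ((y',v',n')#rs))"
| "ch _ = True"

definition rows :: "row list" where
  "rows = [((-1265),False,9), ((-1245),False,17), ((-1225),False,23), ((-1205),False,27), ((-1185),False,31), ((-1165),False,34), ((-1145),False,37), ((-1125),False,39), ((-1105),False,42), ((-1085),False,44), ((-1065),False,46), ((-1045),False,48), ((-1025),False,50), ((-1005),False,52), ((-985),False,53), ((-965),False,55), ((-945),True,85), ((-915),False,59), ((-895),False,60), ((-875),True,92), ((-845),True,95), ((-815),False,65), ((-795),False,66), ((-775),True,101), ((-745),True,103), ((-715),False,70), ((-695),True,106), ((-665),True,108), ((-635),True,110), ((-605),True,112), ((-575),True,113), ((-545),True,115), ((-515),False,77), ((-495),False,78), ((-475),True,118), ((-445),False,79), ((-425),True,120), ((-395),True,121), ((-365),False,81), ((-345),True,122), ((-315),True,123), ((-285),True,124), ((-255),False,83), ((-235),True,125), ((-205),True,125), ((-175),False,84), ((-155),True,126), ((-125),True,126), ((-95),True,126), ((-65),True,127), ((-35),True,127), ((-5),True,127), (25,True,127), (55,True,127), (85,True,126), (115,True,126), (145,True,126), (175,True,125), (205,True,125), (235,False,83), (255,True,124), (285,False,82), (305,False,82), (325,True,122), (355,True,121), (385,True,120), (415,True,119), (445,False,79), (465,False,78), (485,True,116),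 (515,False,77), (535,True,114), (565,True,112), (595,True,110), (625,True,109), (655,True,107), (685,True,105), (715,True,103), (745,True,101), (775,False,66), (795,False,65), (815,False,64), (835,True,93), (865,False,61), (885,False,59), (905,False,58), (925,True,84), (955,False,54), (975,True,78), (1005,False,50), (1025,False,48), (1045,False,46), (1065,False,44), (1085,False,42), (1105,False,39), (1125,False,37), (1145,False,34), (1165,False,31), (1185,False,27), (1205,False,23), (1225,False,17), (1245,False,9)]"

lemma rows_facts: "okr rows" "ch rows" "total rows = 8361"
  by (simp_all add: rows_def rhI_def rwI_def)

lemma rect0: "rect c 0 30 20 = cbox c (c + Complex 30 20)"
proof (rule set_eqI)
  fix z
  show "z \<in> rect c 0 30 20 \<longleftrightarrow> z \<in> cbox c (c + Complex 30 20)"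
  proof
    assume "z \<in> rect c 0 30 20" then show "z \<in> cbox c (c + Complex 30 20)"
      by (auto simp: rect_def cbox_complex_eq)
  next
    assume a: "z \<in> cbox c (c + Complex 30 20)"
    have "z = c + cis 0 * Complex (Re z - Re c) (Im z - Im c)" by (simp add: complex_eq_iff)
    with a show "z \<in> rect c 0 30 20" unfolding rect_def cbox_complex_eq by force
  qed
qed

lemma rect90: "rect c (pi/2) 30 20 = cbox (c - 20) (c + Complex 0 30)"
proof (rule set_eqI)
  fix z
  show "z \<in> rect c (pi/2) 30 20 \<longleftrightarrow> z \<in> cbox (c - 20) (c + Complex 0 30)"
  proof
    assume "z \<in> rect c (pi/2) 30 20" then show "z \<in> cbox (c - 20) (c + Complex 0 30)"
      by (auto simp: rect_def cbox_complex_eq cis.ctr)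
  next
    assume a: "z \<in> cbox (c - 20) (c + Complex 0 30)"
    have "z = c + cis (pi/2) * Complex (Im z - Im c) (Re c - Re z)" by (simp add: complex_eq_iff cis.ctr)
    with a show "z \<in> rect c (pi/2) 30 20" unfolding rect_def cbox_complex_eq by force
  qed
qed

lemma L1: "i < total rs \<Longrightarrow> bx rs i = (x0,x1,y0,y1) \<Longrightarrow>
   x1 - x0 = rwI (vt rs i) \<and> y1 - y0 = rhI (vt rs i)"
proof (induction rs arbitrary: i)
  case Nil then show ?case by simp
next
  case (Cons r rs)
  obtain y v n where r: "r = (y,v,n)" by (cases r) auto
  show ?case
  proof (cases "i < n")
    case True then show ?thesis using Cons.prems r by (auto simp: algebra_simps)
  next
    case False then show ?thesis using Cons r by auto
  qed
qed

lemma sq_between: "(a::real) \<le> x \<Longrightarrow> x \<le> b \<Longrightarrow> x^2 \<le> max (a^2) (b^2)"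
proof (cases "x \<ge> 0")
  case True
  assume "x \<le> b" then have "x^2 \<le> b^2" using True by (intro power_mono) auto
  then show ?thesis by linarith
next
  case False
  assume "a \<le> x" then have "(-x)^2 \<le> (-a)^2" using False by (intro power_mono) auto
  then show ?thesis by simp
qed

lemma L2: "okr rs \<Longrightarrow> i < total rs \<Longrightarrow> bx rs i = (x0,x1,y0,y1) \<Longrightarrow>
   x0 \<le> x \<Longrightarrow> x \<le> x1 \<Longrightarrow> y0 \<le> y \<Longrightarrow> y \<le> y1 \<Longrightarrow> 4 * x^2 + 4 * y^2 \<le> 6484370"
proof (induction rs arbitrary: i)
  case Nil then show ?case by simp
next
  case (Cons r rs)
  obtain yy v n where r: "r = (yy,v,n)" by (cases r) auto
  show ?case
  proof (cases "i < n")
    case True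
    define w where "w = real_of_int (rwI v)"
    have w: "w \<ge> 0" by (simp add: w_def rwI_def)
    have b: "x0 = - (real n * w) / 2 + real i * w" "x1 = - (real n * w) / 2 + real (Suc i) * w"
      "y0 = real_of_int yy" "y1 = real_of_int (yy + rhI v)"
      using Cons.prems True r by (auto simp: w_def)
    have "real i * w \<ge> 0" using w by simp
    moreover have "real (Suc i) * w \<le> real n * w" using True w by (intro mult_right_mono) auto
    ultimately have xb: "\<bar>x\<bar> \<le> real n * w / 2" using Cons.prems b by auto
    have "\<bar>x\<bar>^2 \<le> (real n * w / 2)^2" using xb by (intro power_mono) auto
    hence "x^2 \<le> (real n * w / 2)^2" by simp
    hence X: "4 * x^2 \<le> (real n * w)^2" by (simp add: power_divide)
    have Y: "y^2 \<le> max (y0^2) (y1^2)" using sq_between Cons.prems by blast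
    have ok: "(int n * rwI v)^2 + 4 * max (yy^2) ((yy + rhI v)^2) \<le> 6484370"
      using Cons.prems r by simp
    hence ok': "(real n * w)^2 + 4 * max (y0^2) (y1^2) \<le> 6484370"
      unfolding b w_def by (simp only: of_int_le_iff [symmetric, where 'a=real]) (simp add: of_int_max)
    show ?thesis using X Y ok' by linarith
  next
    case False
    have "i - n < total rs" using False Cons.prems r by auto
    then show ?thesis using Cons False r by auto
  qed
qed

lemma L3: "ch ((y,v,n)#rs) \<Longrightarrow> r \<in> set rs \<Longrightarrow> y + rhI v \<le> fst r"
proof (induction rs arbitrary: y v n)
  case Nil then show ?case by simp
next
  case (Cons r' rs)
  obtain y' v' n' where r': "r' = (y',v',n')" by (cases r') auto
  have h: "y + rhI v \<le> y'" "ch ((y',v',n')#rs)" using Cons.prems r' by auto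
  show ?case
  proof (cases "r = r'")
    case True then show ?thesis using h r' by simp
  next
    case False
    then have "r \<in> set rs" using Cons.prems r' by auto
    then have "y' + rhI v' \<le> fst r" using Cons.IH h(2) by blast
    moreover have "rhI v' \<ge> 0" by (simp add: rhI_def)
    ultimately show ?thesis using h by linarith
  qed
qed

lemma L4: "\<forall>r\<in>set rs. B \<le> fst r \<Longrightarrow> i < total rs \<Longrightarrow> bx rs i = (x0,x1,y0,y1) \<Longrightarrow> real_of_int B \<le> y0"
proof (induction rs arbitrary: i)
  case Nil then show ?case by simp
next
  case (Cons r rs)
  obtain yy v n where r: "r = (yy,v,n)" by (cases r) auto
  show ?case
  proof (cases "i < n")
    case True then show ?thesis using Cons.prems r by auto
  next
    case False
    have "i - n < total rs" using False Cons.prems r by auto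
    then show ?thesis using Cons False r by auto
  qed
qed

lemma ch_tl: "ch (r#rs) \<Longrightarrow> ch rs"
  by (cases r; cases rs) auto

lemma L5: "ch rs \<Longrightarrow> i < total rs \<Longrightarrow> j < total rs \<Longrightarrow> i \<noteq> j \<Longrightarrow>
  bx rs i = (a0,a1,b0,b1) \<Longrightarrow> bx rs j = (c0,c1,d0,d1) \<Longrightarrow>
  a1 \<le> c0 \<or> c1 \<le> a0 \<or> b1 \<le> d0 \<or> d1 \<le> b0"
proof (induction rs arbitrary: i j a0 a1 b0 b1 c0 c1 d0 d1)
  case Nil then show ?case by simp
next
  case (Cons r rs)
  obtain yy v n where r: "r = (yy,v,n)" by (cases r) auto
  have w: "real_of_int (rwI v) \<ge> 0" by (simp add: rwI_def)
  have above: "\<forall>r\<in>set rs. yy + rhI v \<le> fst r" using L3 Cons.prems(1) r by blast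
  show ?case
  proof (cases "i < n")
    case True note i = this
    show ?thesis
    proof (cases "j < n")
      case True
      have e: "a0 = - (real n * rwI v) / 2 + real i * rwI v" "a1 = - (real n * rwI v) / 2 + real (Suc i) * rwI v"
        "c0 = - (real n * rwI v) / 2 + real j * rwI v" "c1 = - (real n * rwI v) / 2 + real (Suc j) * rwI v"
        using Cons.prems i True r by auto
      show ?thesis
      proof (cases "i < j")
        case True
        then have "real (Suc i) * rwI v \<le> real j * rwI v" using w by (intro mult_right_mono) auto
        then show ?thesis using e by auto
      next
        case False
        then have "real (Suc j) * rwI v \<le> real i * rwI v" using w Cons.prems(4) by (intro mult_right_mono) auto
        then show ?thesis using e by auto
      qed
    next
      case False
      have "real_of_int (yy + rhI v) \<le> d0"
        using L4[OF above, of "j - n" c0 c1 d0 d1] Cons.prems False r by auto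
      moreover have "b1 = real_of_int (yy + rhI v)" using Cons.prems i r by auto
      ultimately show ?thesis by auto
    qed
  next
    case False note i = this
    show ?thesis
    proof (cases "j < n")
      case True
      have "real_of_int (yy + rhI v) \<le> b0"
        using L4[OF above, of "i - n" a0 a1 b0 b1] Cons.prems i r by auto
      moreover have "d1 = real_of_int (yy + rhI v)" using Cons.prems True r by auto
      ultimately show ?thesis by auto
    next
      case False
      show ?thesis
        using Cons.IH[OF ch_tl[OF Cons.prems(1)], of "i - n" "j - n"] Cons.prems i False r by auto
    qed
  qed
qed

lemma box_disj: "Re b \<le> Re c' \<or> Re d \<le> Re a \<or> Im b \<le> Im c' \<or> Im d \<le> Im a \<Longrightarrow>
   box a b \<inter> box c' d = {}"
  by (auto simp: box_complex_eq)

lemma A: "6484370 * (3.1416::real)^2 \<le> 4 * 4000^2" by (simp add: power2_eq_square)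
lemma R_bound: "6484370 \<le> 4 * (4000 / pi)^2"
proof -
  have p: "pi \<le> 3.1416" using pi_approx(2) by (simp add: power_numeral)
  have "6484370 * pi^2 \<le> 6484370 * 3.1416^2"
    using p pi_gt_zero by (intro mult_left_mono power_mono) auto
  also have "\<dots> \<le> 4 * 4000^2" by (rule A)
  finally have h: "6484370 * pi^2 \<le> 4 * 4000^2" .
  have q: "pi^2 > 0" using pi_gt_zero by simp
  have "6484370 \<le> 4 * 4000^2 / pi^2" using h q by (simp add: le_divide_eq)
  also have "\<dots> = 4 * (4000 / pi)^2" by (simp add: power_divide)
  finally show ?thesis .
qed

definition cc :: "complex \<Rightarrow> nat \<Rightarrow> complex" where
  "cc z0 i = (case bx rows i of (x0,x1,y0,y1) \<Rightarrow> z0 + Complex (if vt rows i then x1 else x0) y0)"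
definition tt :: "nat \<Rightarrow> real" where
  "tt i = (if vt rows i then pi/2 else 0)"

lemma rect_cc: "i < total rows \<Longrightarrow> bx rows i = (x0,x1,y0,y1) \<Longrightarrow>
  rect (cc z0 i) (tt i) 30 20 = cbox (z0 + Complex x0 y0) (z0 + Complex x1 y1)"
proof -
  assume i: "i < total rows" and b: "bx rows i = (x0,x1,y0,y1)"
  note d = L1[OF i b]
  show ?thesis
  proof (cases "vt rows i")
    case True
    then have "x1 = x0 + 20" "y1 = y0 + 30" using d by (auto simp: rwI_def rhI_def)
    note e = this
    have c: "cc z0 i = z0 + Complex x1 y0" using True b by (simp add: cc_def)
    have t: "tt i = pi/2" using True by (simp add: tt_def)
    have e1: "z0 + Complex x1 y0 - 20 = z0 + Complex x0 y0" using e by (simp add: complex_eq_iff)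
    have e2: "z0 + Complex x1 y0 + Complex 0 30 = z0 + Complex x1 y1" using e by (simp add: complex_eq_iff)
    show ?thesis unfolding c t rect90 e1 e2 ..
  next
    case False
    then have "x1 = x0 + 30" "y1 = y0 + 20" using d by (auto simp: rwI_def rhI_def)
    note e = this
    have c: "cc z0 i = z0 + Complex x0 y0" using False b by (simp add: cc_def)
    have t: "tt i = 0" using False by (simp add: tt_def)
    have e2: "z0 + Complex x0 y0 + Complex 30 20 = z0 + Complex x1 y1" using e by (simp add: complex_eq_iff)
    show ?thesis unfolding c t rect0 e2 ..
  qed
qed

theorem mainTheorem3:
  fixes z0 :: complex
  shows "\<exists>(c :: nat \<Rightarrow> complex) (\<theta> :: nat \<Rightarrow> real).
           (\<forall>i<8349. rect (c i) (\<theta> i) 30 20 \<subseteq> cball z0 (4000 / pi)) \<and>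
           (\<forall>i<8349. \<forall>j<8349. i \<noteq> j \<longrightarrow>
              interior (rect (c i) (\<theta> i) 30 20) \<inter> interior (rect (c j) (\<theta> j) 30 20) = {})"
proof (intro exI conjI allI impI)
  fix i :: nat assume "i < 8349"
  then have i: "i < total rows" using rows_facts by simp
  obtain x0 x1 y0 y1 where b: "bx rows i = (x0,x1,y0,y1)" by (cases "bx rows i") auto
  show "rect (cc z0 i) (tt i) 30 20 \<subseteq> cball z0 (4000 / pi)"
  proof
    fix z assume zr: "z \<in> rect (cc z0 i) (tt i) 30 20"
    have z: "z \<in> cbox (z0 + Complex x0 y0) (z0 + Complex x1 y1)"
      using zr unfolding rect_cc[OF i b] .
    define w where "w = z - z0"
    have h: "x0 \<le> Re w" "Re w \<le> x1" "y0 \<le> Im w" "Im w \<le> y1"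
      using z unfolding cbox_complex_eq w_def by auto
    have "4 * (Re w)^2 + 4 * (Im w)^2 \<le> 6484370" by (rule L2[OF rows_facts(1) i b h])
    moreover have "(cmod w)^2 = (Re w)^2 + (Im w)^2" by (rule cmod_power2)
    ultimately have "(cmod w)^2 \<le> (4000/pi)^2" using R_bound by linarith
    moreover have nn: "0 \<le> 4000/pi" using pi_gt_zero by simp
    ultimately have "cmod w \<le> 4000/pi" by (rule power2_le_imp_le)
    moreover have "dist z0 z = cmod w" unfolding w_def dist_norm by (rule norm_minus_commute)
    ultimately show "z \<in> cball z0 (4000 / pi)" unfolding mem_cball by linarith
  qed
next
  fix i j :: nat assume "i < 8349" "j < 8349" "i \<noteq> j"
  then have i: "i < total rows" and j: "j < total rows" using rows_facts by auto
  obtain a0 a1 b0 b1 where bi: "bx rows i = (a0,a1,b0,b1)" by (cases "bx rows i") auto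
  obtain c0 c1 d0 d1 where bj: "bx rows j = (c0,c1,d0,d1)" by (cases "bx rows j") auto
  have "a1 \<le> c0 \<or> c1 \<le> a0 \<or> b1 \<le> d0 \<or> d1 \<le> b0"
    using L5[OF rows_facts(2) i j \<open>i \<noteq> j\<close> bi bj] .
  then show "interior (rect (cc z0 i) (tt i) 30 20) \<inter> interior (rect (cc z0 j) (tt j) 30 20) = {}"
    unfolding rect_cc[OF i bi] rect_cc[OF j bj] interior_cbox
    by (intro box_disj) auto
qed

end
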